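(* Let $X=x_1x_2\cdots x_s$ be a batch of $S(H)$, where each $x_j$ is $s(v)$ for some vertex $v$ or $e(v,w)$ for some edge $(v,w)$ of $H$. Then for every $1\le j\le s$, some phrase of the LZ77 parsing of the string $x_1\cdots x_s$ ends at the last symbol of $x_j$.
   Context: $H$ is a directed graph without loops in which no vertex has outdegree exactly 1. For each vertex $v$ introduce three symbols $v$, $v'$, $\$_v$; all these symbols are pairwise distinct (over all vertices). For a vertex $v$ with outdegree $d=d(v)\ge 1$, let $w_0,\dots,w_{d-1}$ be its out-neighbors in a fixed cyclic order (indices mod $d$); the edge $(v,w_{i-1})$ cyclicly precedes $(v,w_i)$. Define $e(v,w_i)=(v'w_{i-1})^4v'w_i$ for $0\le i<d$ and $s(v)=v^4(v')^5\$_v$. $S(H)$ is the set of all strings $s(v)$ ($v$ a vertex) and $e(v,w)$ ($(v,w)$ an edge). A batch is a sequence of distinct elements of $S(H)$, identified with their concatenation; a schedule is a partition of $S(H)$ into batches. LZ77 parsing of a string $z$: $z=z_1z_2\cdots z_t$ where, once $z_1,\dots,z_{i-1}$ are determined and the remaining suffix is nonempty, $z_i$ is the longest nonempty prefix $u$ of the remaining suffix such that $u^-$ ($u$ with its last symbol deleted) has an occurrence in $z$ starting at a position strictly smaller than the starting position of $u$ (the empty string always qualifies). The $z_i$ are the phrases; $|\mathcal C(z)|=t$ is the number of phrases. *)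

theory Defs
  imports Main
begin

text \<open>Symbols: for each vertex v the three pairwise distinct symbols v, v', and dollar_v.\<close>
datatype 'a sym = Plain 'a | Primed 'a | Dollar 'a

text \<open>Standing assumptions on H = (V, E) together with a fixed cyclic order
  (the list cord v enumerates the out-neighbours w_0, ..., w_(d-1) of v).\<close>
definition valid_graph :: "'a set \<Rightarrow> ('a \<times> 'a) set \<Rightarrow> ('a \<Rightarrow> 'a list) \<Rightarrow> bool" where
  "valid_graph V E cord \<longleftrightarrow> finite V \<and> E \<subseteq> V \<times> V \<and> (\<forall>v. (v, v) \<notin> E)
     \<and> (\<forall>v\<in>V. card {w. (v, w) \<in> E} \<noteq> 1)
     \<and> (\<forall>v\<in>V. distinct (cord v) \<and> set (cord v) = {w. (v, w) \<in> E})"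

definition s_str :: "'a \<Rightarrow> 'a sym list" where
  "s_str v = replicate 4 (Plain v) @ replicate 5 (Primed v) @ [Dollar v]"

text \<open>e(v,w_i) = (v' w_(i-1))^4 v' w_i, indices mod d.\<close>
definition e_str :: "('a \<Rightarrow> 'a list) \<Rightarrow> 'a \<Rightarrow> 'a \<Rightarrow> 'a sym list" where
  "e_str cord v w = (let ws = cord v; d = length ws; i = (THE i. i < d \<and> ws ! i = w);
                        wp = ws ! ((i + d - 1) mod d)
                     in concat (replicate 4 [Primed v, Plain wp]) @ [Primed v, Plain w])"

definition S_set :: "'a set \<Rightarrow> ('a \<times> 'a) set \<Rightarrow> ('a \<Rightarrow> 'a list) \<Rightarrow> 'a sym list set" where
  "S_set V E cord = {s_str v | v. v \<in> V} \<union> {e_str cord v w | v w. (v, w) \<in> E}"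

definition is_batch :: "'a set \<Rightarrow> ('a \<times> 'a) set \<Rightarrow> ('a \<Rightarrow> 'a list) \<Rightarrow> 'a sym list list \<Rightarrow> bool" where
  "is_batch V E cord xs \<longleftrightarrow> distinct xs \<and> set xs \<subseteq> S_set V E cord"

text \<open>LZ77. Positions are 0-based. A candidate phrase at position p of length l
  (p + l <= length z) qualifies if l = 1 (u^- empty) or u^- = z[p..p+l-1) occurs in z
  starting at some q < p.\<close>
definition lz_qualifies :: "'b list \<Rightarrow> nat \<Rightarrow> nat \<Rightarrow> bool" where
  "lz_qualifies z p l \<longleftrightarrow> 1 \<le> l \<and> p + l \<le> length z \<and>
     (l = 1 \<or> (\<exists>q<p. q + (l - 1) \<le> length z \<and>
                 take (l - 1) (drop q z) = take (l - 1) (drop p z)))"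

definition lz_phrase_len :: "'b list \<Rightarrow> nat \<Rightarrow> nat" where
  "lz_phrase_len z p = (GREATEST l. lz_qualifies z p l)"

inductive lz_start :: "'b list \<Rightarrow> nat \<Rightarrow> bool" for z where
  start0: "lz_start z 0"
| step: "lz_start z p \<Longrightarrow> p < length z \<Longrightarrow> lz_start z (p + lz_phrase_len z p)"

text \<open>Some phrase of the LZ77 parsing of z ends at (0-based) position k
  (i.e. its last symbol is z ! k).\<close>
definition lz_phrase_ends_at :: "'b list \<Rightarrow> nat \<Rightarrow> bool" where
  "lz_phrase_ends_at z k \<longleftrightarrow> (\<exists>p. lz_start z p \<and> p < length z \<and> p + lz_phrase_len z p = Suc k)"

end

theory Submission
  imports Defs
begin


lemma qual_bound: "lz_qualifies z p l \<Longrightarrow> l \<le> length z - p"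
  by (auto simp: lz_qualifies_def)

lemma qual1: "p < length z \<Longrightarrow> lz_qualifies z p 1"
  by (auto simp: lz_qualifies_def)

lemma len_qual: "p < length z \<Longrightarrow> lz_qualifies z p (lz_phrase_len z p)"
  unfolding lz_phrase_len_def
  by (rule GreatestI_nat[where k=1]) (auto simp: qual1[simplified] dest: qual_bound)

lemma len_ge: "lz_qualifies z p l \<Longrightarrow> l \<le> lz_phrase_len z p"
  unfolding lz_phrase_len_def
  by (rule Greatest_le_nat[where b="length z"]) (auto dest: qual_bound)

lemma len_pos: "p < length z \<Longrightarrow> 1 \<le> lz_phrase_len z p"
  using len_ge[OF qual1] by blast

lemma len_bound: "p < length z \<Longrightarrow> p + lz_phrase_len z p \<le> length z"
  using len_qual[of p z] by (auto simp: lz_qualifies_def)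

lemma qual_mono:
  assumes "lz_qualifies z p l" "1 \<le> l'" "l' \<le> l"
  shows "lz_qualifies z p l'"
proof (cases "l' = 1")
  case True then show ?thesis using assms by (auto simp: lz_qualifies_def)
next
  case False
  with assms have "l \<noteq> 1" by auto
  with assms obtain q where q: "q < p" "q + (l - 1) \<le> length z"
    "take (l - 1) (drop q z) = take (l - 1) (drop p z)" by (auto simp: lz_qualifies_def)
  then have "take (l' - 1) (take (l - 1) (drop q z)) = take (l' - 1) (take (l - 1) (drop p z))" by simp
  then have "take (l' - 1) (drop q z) = take (l' - 1) (drop p z)" using assms by (simp add: min_def split: if_splits)
  then show ?thesis using q assms by (auto simp: lz_qualifies_def)
qed

lemma qual_get:
  assumes "lz_qualifies z p l" "2 \<le> l"
  shows "\<exists>q<p. q + (l - 1) \<le> length z \<and> take (l - 1) (drop q z) = take (l - 1) (drop p z)"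
  using assms by (auto simp: lz_qualifies_def)

lemma sub_take:
  assumes "take L (drop q z) = take L (drop p z)" "m + n \<le> L"
  shows "take n (drop (q + m) z) = take n (drop (p + m) z)"
proof -
  have "take n (drop m (take L (drop q z))) = take n (drop m (take L (drop p z)))" using assms by simp
  moreover have "\<And>r. take n (drop m (take L (drop r z))) = take n (drop (r + m) z)"
    using assms(2) by (simp add: drop_take min_def add.commute)
  ultimately show ?thesis by simp
qed

lemma cover:
  "lz_start z p \<Longrightarrow> p \<le> t \<Longrightarrow> t < length z \<Longrightarrow>
   \<exists>p'. lz_start z p' \<and> p \<le> p' \<and> p' \<le> t \<and> t < p' + lz_phrase_len z p'"
proof (induction "t - p" arbitrary: p rule: less_induct)
  case less
  show ?case
  proof (cases "t < p + lz_phrase_len z p")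
    case True then show ?thesis using less.prems by blast
  next
    case False
    have pl: "p < length z" using less.prems by simp
    have st: "lz_start z (p + lz_phrase_len z p)" using lz_start.step[OF less.prems(1) pl] .
    have "1 \<le> lz_phrase_len z p" using len_pos[OF pl] .
    then obtain p' where "lz_start z p' \<and> p + lz_phrase_len z p \<le> p' \<and> p' \<le> t \<and> t < p' + lz_phrase_len z p'"
      using less.hyps[of "p + lz_phrase_len z p"] st False less.prems by fastforce
    then show ?thesis by (meson le_add1 le_trans)
  qed
qed



definition ek :: "'a \<Rightarrow> 'a \<Rightarrow> 'a \<Rightarrow> 'a sym list" where
  "ek u y x = [Primed u, Plain y, Primed u, Plain y, Primed u, Plain y, Primed u, Plain y, Primed u, Plain x]"

lemma ss_eq: "s_str u = [Plain u, Plain u, Plain u, Plain u, Primed u, Primed u, Primed u, Primed u, Primed u, Dollar u]"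
  by (simp add: s_str_def numeral_eq_Suc)

lemma drop_concat_blk:
  assumes "\<forall>y\<in>set xs. length y = 10" "i < length xs" "k \<le> 10"
  shows "drop (10*i+k) (concat xs) = drop k (xs!i) @ concat (drop (Suc i) xs)"
  using assms
proof (induction xs arbitrary: i)
  case Nil then show ?case by simp
next
  case (Cons y ys)
  show ?case
  proof (cases i)
    case 0 then show ?thesis using Cons.prems by simp
  next
    case (Suc i')
    have "drop (10*i+k) (concat (y#ys)) = drop (10*i'+k) (concat ys)"
      using Cons.prems Suc by simp
    also have "\<dots> = drop k (ys!i') @ concat (drop (Suc i') ys)"
      using Cons Suc by simp
    finally show ?thesis using Suc by simp
  qed
qed

locale blk =
  fixes xs :: "'a sym list list" and prd :: "'a \<Rightarrow> 'a \<Rightarrow> 'a" and E :: "('a \<times> 'a) set"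
  assumes shp: "\<forall>y\<in>set xs. (\<exists>u. y = s_str u) \<or> (\<exists>u x. y = ek u (prd u x) x \<and> prd u x \<noteq> x \<and> (u,x) \<in> E)"
    and inj: "\<And>u x x'. (u,x)\<in>E \<Longrightarrow> (u,x')\<in>E \<Longrightarrow> prd u x = prd u x' \<Longrightarrow> x = x'"
    and dist: "distinct xs"
begin

lemma len10: "\<forall>y\<in>set xs. length y = 10"
  using shp by (auto simp: ss_eq ek_def)

lemma lenz: "length (concat xs) = 10 * length xs"
proof -
  have "length (concat xs) = sum_list (map length xs)" by (simp add: length_concat)
  also have "map length xs = map (\<lambda>_. 10) xs" using len10 by (simp add: map_eq_conv)
  finally show ?thesis by (simp add: sum_list_triv)
qed

lemma idx: "i < length xs \<Longrightarrow> j < length xs \<Longrightarrow> xs!i = xs!j \<Longrightarrow> i = j"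
  using dist nth_eq_iff_index_eq by blast

lemma shape: "i < length xs \<Longrightarrow> (\<exists>u. xs!i = s_str u) \<or> (\<exists>u x. xs!i = ek u (prd u x) x \<and> prd u x \<noteq> x \<and> (u,x) \<in> E)"
  using shp nth_mem by blast

lemma decomp:
  assumes "r < length (concat xs)"
  shows "r div 10 < length xs \<and> drop r (concat xs) = drop (r mod 10) (xs!(r div 10)) @
     (if Suc (r div 10) < length xs then xs!(Suc (r div 10)) @ concat (drop (Suc (Suc (r div 10))) xs) else [])"
proof -
  have i: "r div 10 < length xs" using assms lenz by simp
  have r: "r = 10 * (r div 10) + r mod 10" by simp
  have "drop r (concat xs) = drop (r mod 10) (xs!(r div 10)) @ concat (drop (Suc (r div 10)) xs)"
    using drop_concat_blk[OF len10 i, of "r mod 10"] r by simp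
  moreover have "concat (drop (Suc (r div 10)) xs) = (if Suc (r div 10) < length xs then xs!(Suc (r div 10)) @ concat (drop (Suc (Suc (r div 10))) xs) else [])"
    by (simp add: Cons_nth_drop_Suc[symmetric])
  ultimately show ?thesis using i by simp
qed

lemma cases10: "(k::nat) < 10 \<Longrightarrow> k = 0 \<or> k = 1 \<or> k = 2 \<or> k = 3 \<or> k = 4 \<or> k = 5 \<or> k = 6 \<or> k = 7 \<or> k = 8 \<or> k = 9"
  by arith

lemma F1:
  assumes j: "j < length xs" "xs!j = ek v a w" and aw: "a \<noteq> w"
    and t: "take 6 (drop r (concat xs)) = [Primed v, Plain a, Primed v, Plain a, Primed v, Plain w]"
    and rl: "r + 6 \<le> length (concat xs)"
  shows "r = 10 * j + 4"
proof -
  define i where "i = r div 10"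
  define k where "k = r mod 10"
  have r: "r = 10 * i + k" "k < 10" unfolding i_def k_def by simp_all
  from decomp[of r] rl have i: "i < length xs" and
    d: "drop r (concat xs) = drop k (xs!i) @ (if Suc i < length xs then xs!(Suc i) @ concat (drop (Suc (Suc i)) xs) else [])"
    unfolding i_def k_def by auto
  have sh1: "(\<exists>u. xs!i = s_str u) \<or> (\<exists>u x. xs!i = ek u (prd u x) x \<and> prd u x \<noteq> x \<and> (u,x) \<in> E)"
    using shape[OF i] .
  have oo: "k = 0 \<or> k = 1 \<or> k = 2 \<or> k = 3 \<or> k = 4 \<or> k = 5 \<or> k = 6 \<or> k = 7 \<or> k = 8 \<or> k = 9" using cases10 r(2) .
  show ?thesis
  proof (cases "Suc i < length xs")
    case False
    with d have t2: "take 6 (drop k (xs!i)) = [Primed v, Plain a, Primed v, Plain a, Primed v, Plain w]" using t by simp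
    from sh1 oo t2 j aw have "k = 4 \<and> xs!i = xs!j"
      by (elim disjE exE conjE; simp add: ss_eq ek_def)
    then show ?thesis using idx[OF i j(1)] r by simp
  next
    case True
    with d have t2: "take 6 (drop k (xs!i) @ xs!(Suc i) @ concat (drop (Suc (Suc i)) xs)) = [Primed v, Plain a, Primed v, Plain a, Primed v, Plain w]" using t by simp
    have sh2: "(\<exists>u. xs!Suc i = s_str u) \<or> (\<exists>u x. xs!Suc i = ek u (prd u x) x \<and> prd u x \<noteq> x \<and> (u,x) \<in> E)"
      using shape[OF True] .
    from sh1 sh2 oo t2 j aw have "k = 4 \<and> xs!i = xs!j"
      by (elim disjE exE conjE; simp add: ss_eq ek_def)
    then show ?thesis using idx[OF i j(1)] r by simp
  qed
qed

lemma F2: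
  assumes j: "j < length xs" "xs!j = ek v a w" and aw: "a \<noteq> w"
    and t: "take 4 (drop r (concat xs)) = [Primed v, Plain a, Primed v, Plain a]"
    and rl: "r + 4 \<le> length (concat xs)"
      and hx: "\<forall>x. (v,x) \<in> E \<longrightarrow> prd v x = a \<longrightarrow> x = w" and ql: "r < 10 * j"
  shows "r + 2 = 10 * j"
proof -
  define i where "i = r div 10"
  define k where "k = r mod 10"
  have r: "r = 10 * i + k" "k < 10" unfolding i_def k_def by simp_all
  from decomp[of r] rl have i: "i < length xs" and
    d: "drop r (concat xs) = drop k (xs!i) @ (if Suc i < length xs then xs!(Suc i) @ concat (drop (Suc (Suc i)) xs) else [])"
    unfolding i_def k_def by auto
  have sh1: "(\<exists>u. xs!i = s_str u) \<or> (\<exists>u x. xs!i = ek u (prd u x) x \<and> prd u x \<noteq> x \<and> (u,x) \<in> E)"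
    using shape[OF i] .
  have oo: "k = 0 \<or> k = 1 \<or> k = 2 \<or> k = 3 \<or> k = 4 \<or> k = 5 \<or> k = 6 \<or> k = 7 \<or> k = 8 \<or> k = 9" using cases10 r(2) .
  show ?thesis
  proof (cases "Suc i < length xs")
    case False
    with d have t2: "take 4 (drop k (xs!i)) = [Primed v, Plain a, Primed v, Plain a]" using t by simp
    from sh1 oo t2 j aw have "(k \<in> {0,2,4} \<and> xs!i = xs!j) \<or> (k = 8 \<and> Suc i < length xs \<and> xs!Suc i = xs!j)"
      apply (elim disjE exE conjE; simp add: ss_eq ek_def)
      apply (rule hx[rule_format], assumption, assumption)+
      done
    then show ?thesis
    proof (elim disjE conjE)
      assume "k \<in> {0,2,4}" "xs!i = xs!j"
      then have "i = j" using idx[OF i j(1)] by simp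
      then show ?thesis using r ql `k \<in> {0,2,4}` by auto
    next
      assume "k = 8" "Suc i < length xs" "xs!Suc i = xs!j"
      then have "Suc i = j" using idx[OF _ j(1), of "Suc i"] by simp
      then show ?thesis using r `k = 8` by simp
    qed
  next
    case True
    with d have t2: "take 4 (drop k (xs!i) @ xs!(Suc i) @ concat (drop (Suc (Suc i)) xs)) = [Primed v, Plain a, Primed v, Plain a]" using t by simp
    have sh2: "(\<exists>u. xs!Suc i = s_str u) \<or> (\<exists>u x. xs!Suc i = ek u (prd u x) x \<and> prd u x \<noteq> x \<and> (u,x) \<in> E)"
      using shape[OF True] .
    from sh1 sh2 oo t2 j aw have "(k \<in> {0,2,4} \<and> xs!i = xs!j) \<or> (k = 8 \<and> Suc i < length xs \<and> xs!Suc i = xs!j)"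
      apply (elim disjE exE conjE; simp add: ss_eq ek_def True)
      apply (rule hx[rule_format], assumption, assumption)+
      done
    then show ?thesis
    proof (elim disjE conjE)
      assume "k \<in> {0,2,4}" "xs!i = xs!j"
      then have "i = j" using idx[OF i j(1)] by simp
      then show ?thesis using r ql `k \<in> {0,2,4}` by auto
    next
      assume "k = 8" "Suc i < length xs" "xs!Suc i = xs!j"
      then have "Suc i = j" using idx[OF _ j(1), of "Suc i"] by simp
      then show ?thesis using r `k = 8` by simp
    qed
  qed
qed

lemma F3:
  assumes j: "j < length xs" "xs!j = ek v a w" and aw: "a \<noteq> w"
    and t: "take 3 (drop r (concat xs)) = [Plain a, Primed v, Plain a]"
    and rl: "r + 3 \<le> length (concat xs)"
      and hx: "\<forall>x. (v,x) \<in> E \<longrightarrow> prd v x = a \<longrightarrow> x = w" and ql: "r < 10 * j + 1"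
  shows "r + 1 = 10 * j"
proof -
  define i where "i = r div 10"
  define k where "k = r mod 10"
  have r: "r = 10 * i + k" "k < 10" unfolding i_def k_def by simp_all
  from decomp[of r] rl have i: "i < length xs" and
    d: "drop r (concat xs) = drop k (xs!i) @ (if Suc i < length xs then xs!(Suc i) @ concat (drop (Suc (Suc i)) xs) else [])"
    unfolding i_def k_def by auto
  have sh1: "(\<exists>u. xs!i = s_str u) \<or> (\<exists>u x. xs!i = ek u (prd u x) x \<and> prd u x \<noteq> x \<and> (u,x) \<in> E)"
    using shape[OF i] .
  have oo: "k = 0 \<or> k = 1 \<or> k = 2 \<or> k = 3 \<or> k = 4 \<or> k = 5 \<or> k = 6 \<or> k = 7 \<or> k = 8 \<or> k = 9" using cases10 r(2) .
  show ?thesis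
  proof (cases "Suc i < length xs")
    case False
    with d have t2: "take 3 (drop k (xs!i)) = [Plain a, Primed v, Plain a]" using t by simp
    from sh1 oo t2 j aw have "(k \<in> {1,3,5} \<and> xs!i = xs!j) \<or> (k = 9 \<and> Suc i < length xs \<and> xs!Suc i = xs!j)"
      apply (elim disjE exE conjE; simp add: ss_eq ek_def)
      apply (rule hx[rule_format], assumption, assumption)+
      done
    then show ?thesis
    proof (elim disjE conjE)
      assume "k \<in> {1,3,5}" "xs!i = xs!j"
      then have "i = j" using idx[OF i j(1)] by simp
      then show ?thesis using r ql `k \<in> {1,3,5}` by auto
    next
      assume "k = 9" "Suc i < length xs" "xs!Suc i = xs!j"
      then have "Suc i = j" using idx[OF _ j(1), of "Suc i"] by simp
      then show ?thesis using r `k = 9` by simp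
    qed
  next
    case True
    with d have t2: "take 3 (drop k (xs!i) @ xs!(Suc i) @ concat (drop (Suc (Suc i)) xs)) = [Plain a, Primed v, Plain a]" using t by simp
    have sh2: "(\<exists>u. xs!Suc i = s_str u) \<or> (\<exists>u x. xs!Suc i = ek u (prd u x) x \<and> prd u x \<noteq> x \<and> (u,x) \<in> E)"
      using shape[OF True] .
    from sh1 sh2 oo t2 j aw have "(k \<in> {1,3,5} \<and> xs!i = xs!j) \<or> (k = 9 \<and> Suc i < length xs \<and> xs!Suc i = xs!j)"
      apply (elim disjE exE conjE; simp add: ss_eq ek_def True)
      apply (rule hx[rule_format], assumption, assumption)+
      done
    then show ?thesis
    proof (elim disjE conjE)
      assume "k \<in> {1,3,5}" "xs!i = xs!j"
      then have "i = j" using idx[OF i j(1)] by simp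
      then show ?thesis using r ql `k \<in> {1,3,5}` by auto
    next
      assume "k = 9" "Suc i < length xs" "xs!Suc i = xs!j"
      then have "Suc i = j" using idx[OF _ j(1), of "Suc i"] by simp
      then show ?thesis using r `k = 9` by simp
    qed
  qed
qed

lemma FD:
  assumes j: "j < length xs" "xs!j = s_str v"
    and t: "take 1 (drop r (concat xs)) = [Dollar v]"
    and rl: "r + 1 \<le> length (concat xs)"
  
  shows "r = 10 * j + 9"
proof -
  define i where "i = r div 10"
  define k where "k = r mod 10"
  have r: "r = 10 * i + k" "k < 10" unfolding i_def k_def by simp_all
  from decomp[of r] rl have i: "i < length xs" and
    d: "drop r (concat xs) = drop k (xs!i) @ (if Suc i < length xs then xs!(Suc i) @ concat (drop (Suc (Suc i)) xs) else [])"
    unfolding i_def k_def by auto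
  have sh1: "(\<exists>u. xs!i = s_str u) \<or> (\<exists>u x. xs!i = ek u (prd u x) x \<and> prd u x \<noteq> x \<and> (u,x) \<in> E)"
    using shape[OF i] .
  have oo: "k = 0 \<or> k = 1 \<or> k = 2 \<or> k = 3 \<or> k = 4 \<or> k = 5 \<or> k = 6 \<or> k = 7 \<or> k = 8 \<or> k = 9" using cases10 r(2) .
  show ?thesis
  proof (cases "Suc i < length xs")
    case False
    with d have t2: "take 1 (drop k (xs!i)) = [Dollar v]" using t by simp
    from sh1 oo t2 j have "k = 9 \<and> xs!i = xs!j"
      by (elim disjE exE conjE; simp add: ss_eq ek_def)
    then show ?thesis using idx[OF i j(1)] r by auto
  next
    case True
    with d have t2: "take 1 (drop k (xs!i) @ xs!(Suc i) @ concat (drop (Suc (Suc i)) xs)) = [Dollar v]" using t by simp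
    have sh2: "(\<exists>u. xs!Suc i = s_str u) \<or> (\<exists>u x. xs!Suc i = ek u (prd u x) x \<and> prd u x \<noteq> x \<and> (u,x) \<in> E)"
      using shape[OF True] .
    from sh1 sh2 oo t2 j have "k = 9 \<and> xs!i = xs!j"
      by (elim disjE exE conjE; simp add: ss_eq ek_def)
    then show ?thesis using idx[OF i j(1)] r by auto
  qed
qed

end


definition prc :: "('a \<Rightarrow> 'a list) \<Rightarrow> 'a \<Rightarrow> 'a \<Rightarrow> 'a" where
  "prc cord v w = (let ws = cord v; d = length ws; i = (THE i. i < d \<and> ws ! i = w) in ws ! ((i + d - 1) mod d))"

lemma e_eq: "e_str cord v w = ek v (prc cord v w) w"
  by (simp add: e_str_def prc_def Let_def ek_def numeral_eq_Suc)

lemma the_idx: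
  assumes "distinct ws" "w \<in> set ws"
  shows "(THE i. i < length ws \<and> ws ! i = w) < length ws \<and> ws ! (THE i. i < length ws \<and> ws ! i = w) = w"
  using theI'[OF distinct_Ex1[OF assms]] .

lemma predidx: "0 < d \<Longrightarrow> i < d \<Longrightarrow> (i + d - 1) mod (d::nat) = (if i = 0 then d - 1 else i - 1)"
proof (cases "i = 0")
  case False
  assume "0 < d" "i < d"
  from False obtain m where "i = Suc m" by (cases i) auto
  then show ?thesis using \<open>i < d\<close> by simp
qed simp

lemma graph_basic:
  assumes vg: "valid_graph V E cord" and e: "(v,w) \<in> E"
  shows "distinct (cord v) \<and> w \<in> set (cord v) \<and> 2 \<le> length (cord v) \<and> set (cord v) = {w. (v, w) \<in> E}"
proof -
  have v: "v \<in> V" using vg e by (auto simp: valid_graph_def)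
  have d: "distinct (cord v)" and s: "set (cord v) = {w. (v, w) \<in> E}"
    using vg v by (auto simp: valid_graph_def)
  have c: "card {w. (v, w) \<in> E} \<noteq> 1" using vg v by (auto simp: valid_graph_def)
  have "length (cord v) = card {w. (v, w) \<in> E}" using distinct_card[OF d] s by simp
  moreover have "w \<in> set (cord v)" using s e by simp
  ultimately have "2 \<le> length (cord v)" using c
    by (metis One_nat_def Suc_1 Suc_leI le_antisym length_pos_if_in_set not_less_eq_eq)
  then show ?thesis using d s e by simp
qed

lemma graph_ne:
  assumes vg: "valid_graph V E cord" and e: "(v,w) \<in> E"
  shows "prc cord v w \<noteq> w"
proof -
  define ws where "ws = cord v"
  define d where "d = length ws"
  define i where "i = (THE i. i < d \<and> ws ! i = w)"
  have b: "distinct ws" "w \<in> set ws" "2 \<le> d" using graph_basic[OF vg e] unfolding ws_def d_def by auto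
  have i: "i < d" "ws ! i = w" using the_idx[OF b(1,2)] unfolding i_def d_def by auto
  have pi: "(i + d - 1) mod d = (if i = 0 then d - 1 else i - 1)" using predidx[of d i] i b by simp
  have ne: "(i + d - 1) mod d \<noteq> i" using pi b(3) by auto
  have lt: "(i + d - 1) mod d < d" using b(3) by simp
  have "prc cord v w = ws ! ((i + d - 1) mod d)" unfolding prc_def ws_def d_def i_def Let_def by simp
  also have "\<dots> \<noteq> ws ! i" using nth_eq_iff_index_eq[OF b(1)] lt i(1) ne unfolding d_def by blast
  finally show ?thesis using i by simp
qed

lemma graph_inj:
  assumes vg: "valid_graph V E cord" and e: "(v,x) \<in> E" and e': "(v,x') \<in> E"
    and eq: "prc cord v x = prc cord v x'"
  shows "x = x'"
proof -
  define ws where "ws = cord v"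
  define d where "d = length ws"
  define i where "i = (THE i. i < d \<and> ws ! i = x)"
  define i' where "i' = (THE i. i < d \<and> ws ! i = x')"
  have b: "distinct ws" "x \<in> set ws" "x' \<in> set ws" "2 \<le> d"
    using graph_basic[OF vg e] graph_basic[OF vg e'] unfolding ws_def d_def by auto
  have i: "i < d" "ws ! i = x" using the_idx[OF b(1,2)] unfolding i_def d_def by auto
  have i': "i' < d" "ws ! i' = x'" using the_idx[OF b(1,3)] unfolding i'_def d_def by auto
  have "ws ! ((i + d - 1) mod d) = ws ! ((i' + d - 1) mod d)"
    using eq unfolding prc_def ws_def d_def i_def i'_def Let_def by simp
  moreover have lt: "(i + d - 1) mod d < d" "(i' + d - 1) mod d < d" using b(4) by simp_all
  ultimately have "(i + d - 1) mod d = (i' + d - 1) mod d"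
    using nth_eq_iff_index_eq[OF b(1) lt[unfolded d_def]] unfolding d_def by simp
  then have "i = i'" using predidx[of d i] predidx[of d i'] i i' b(4) by (auto split: if_splits)
  then show ?thesis using i i' by simp
qed

context blk
begin

lemma blk_e:
  assumes st: "lz_start (concat xs) (10*j)" and j: "j < length xs" "xs!j = ek v a w"
    and aw: "a \<noteq> w" and vw: "(v,w) \<in> E" and a: "prd v w = a"
  shows "lz_phrase_ends_at (concat xs) (10*j+9)"
proof -
  define z where "z = concat xs"
  define b where "b = 10 * j"
  have lz: "b + 10 \<le> length z" using lenz j unfolding z_def b_def by simp
  have hx: "\<forall>x. (v,x) \<in> E \<longrightarrow> prd v x = a \<longrightarrow> x = w" using inj vw a by blast
  have dj: "\<And>k. k \<le> 10 \<Longrightarrow> drop (b+k) z = drop k (ek v a w) @ concat (drop (Suc j) xs)"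
    using drop_concat_blk[OF len10 j(1)] j(2) unfolding z_def b_def by simp
  obtain p where p: "lz_start z p" "b \<le> p" "p \<le> b+4" "b+4 < p + lz_phrase_len z p"
    using cover[of z b "b+4"] st lz unfolding z_def b_def by auto
  define L where "L = lz_phrase_len z p"
  have pz: "p < length z" using p lz by simp
  have qL: "lz_qualifies z p L" using len_qual[OF pz] unfolding L_def .
  have lower: "b + 10 \<le> p + L"
  proof -
    have "lz_qualifies z p (b + 10 - p)"
    proof -
      have dd: "p = b \<or> p = b+1 \<or> p = b+2 \<or> p = b+3 \<or> p = b+4" using p(2,3) by arith
      have "\<exists>q<p. q + (b + 9 - p) \<le> length z \<and> take (b + 9 - p) (drop q z) = take (b + 9 - p) (drop p z)"
      proof -
        { assume "p = b+2"
          then have "take 7 (drop (b+0) z) = take 7 (drop (b+2) z)" using dj[of 0] dj[of 2] by (simp add: ek_def)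
          then have ?thesis using \<open>p = b+2\<close> lz by (intro exI[of _ "b"]) simp }
        moreover
        { assume "p = b+3"
          then have "take 6 (drop (b+1) z) = take 6 (drop (b+3) z)" using dj[of 1] dj[of 3] by (simp add: ek_def)
          then have ?thesis using \<open>p = b+3\<close> lz by (intro exI[of _ "b+1"]) simp }
        moreover
        { assume "p = b+4"
          then have "take 5 (drop (b+2) z) = take 5 (drop (b+4) z)" using dj[of 2] dj[of 4] by (simp add: ek_def)
          then have ?thesis using \<open>p = b+4\<close> lz by (intro exI[of _ "b+2"]) simp }
        moreover
        { assume pb: "p = b+1"
          have "lz_qualifies z p 4" using qual_mono[OF qL] p(4) pb unfolding L_def by simp
          then obtain q where q: "q < p" "q + 3 \<le> length z" "take 3 (drop q z) = take 3 (drop p z)"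
            using qual_get[of z p 4] by auto
          have t3: "take 3 (drop p z) = [Plain a, Primed v, Plain a]" using dj[of 1] pb by (simp add: ek_def)
          have q1: "q + 1 = b" using F3[OF j aw _ _ hx, of q] q t3 pb unfolding z_def b_def by simp
          have zq: "z ! q = Plain a"
          proof -
            have "take 3 (drop q z) ! 0 = z ! q" using q(2) by simp
            then show ?thesis using q(3) t3 by simp
          qed
          have "drop q z = z ! q # drop (Suc q) z" using q(2) by (simp add: Cons_nth_drop_Suc)
          then have dq: "drop q z = Plain a # drop (b+0) z" using zq q1 by simp
          have "take 8 (drop q z) = take 8 (drop (b+1) z)" using dq dj[of 0] dj[of 1] by (simp add: ek_def)
          then have ?thesis using q pb lz by (intro exI[of _ q]) simp }
        moreover
        { assume pb: "p = b"
          have "lz_qualifies z p 5" using qual_mono[OF qL] p(4) pb unfolding L_def by simp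
          then obtain q where q: "q < p" "q + 4 \<le> length z" "take 4 (drop q z) = take 4 (drop p z)"
            using qual_get[of z p 5] by auto
          have t4: "take 4 (drop p z) = [Primed v, Plain a, Primed v, Plain a]" using dj[of 0] pb by (simp add: ek_def)
          have q2: "q + 2 = b" using F2[OF j aw _ _ hx, of q] q t4 pb unfolding z_def b_def by simp
          have zq: "z ! q = Primed v" "z ! (Suc q) = Plain a"
          proof -
            have "take 4 (drop q z) ! 0 = z ! q" "take 4 (drop q z) ! 1 = z ! (Suc q)" using q(2) by simp_all
            then show "z ! q = Primed v" "z ! (Suc q) = Plain a" using q(3) t4 by simp_all
          qed
          have "q < length z" "Suc q < length z" using q(2) by simp_all
          then have "drop q z = z ! q # z ! (Suc q) # drop (Suc (Suc q)) z"
            by (simp add: Cons_nth_drop_Suc)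
          then have dq: "drop q z = Primed v # Plain a # drop (b+0) z" using zq q2 by simp
          have "take 9 (drop q z) = take 9 (drop (b+0) z)" using dq dj[of 0] by (simp add: ek_def)
          then have ?thesis using q pb lz by (intro exI[of _ q]) simp }
        ultimately show ?thesis using dd by blast
      qed
      then obtain q where q: "q<p" "q + (b+9-p) \<le> length z" "take (b+9-p) (drop q z) = take (b+9-p) (drop p z)" by blast
      have e: "b + 10 - p - 1 = b + 9 - p" using p(3) by simp
      show ?thesis unfolding lz_qualifies_def e
      proof (intro conjI disjI2)
        show "1 \<le> b+10-p" using p(3) by simp
        show "p + (b+10-p) \<le> length z" using p(3) lz by simp
        show "\<exists>q<p. q + (b+9-p) \<le> length z \<and> take (b+9-p) (drop q z) = take (b+9-p) (drop p z)" using q by blast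
      qed
    qed
    then have "b + 10 - p \<le> L" using len_ge unfolding L_def by blast
    then show ?thesis using p(3) by simp
  qed
  have upper: "p + L \<le> b + 10"
  proof (rule ccontr)
    assume "\<not> p + L \<le> b + 10"
    then have big: "b + 11 \<le> p + L" by simp
    obtain q where q: "q < p" "q + (L - 1) \<le> length z" "take (L - 1) (drop q z) = take (L - 1) (drop p z)"
      using qual_get[OF qL] big p(3) by auto
    have "take 6 (drop (q + (b+4-p)) z) = take 6 (drop (p + (b+4-p)) z)"
      by (rule sub_take[OF q(3)]) (use big p(3) in simp)
    also have "p + (b+4-p) = b + 4" using p(3) by simp
    also have "take 6 (drop (b+4) z) = [Primed v, Plain a, Primed v, Plain a, Primed v, Plain w]"
      using dj[of 4] by (simp add: ek_def)
    finally have t6: "take 6 (drop (q + (b+4-p)) z) = [Primed v, Plain a, Primed v, Plain a, Primed v, Plain w]" .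
    have "q + (b+4-p) + 6 \<le> length z" using q(2) big p(3) by simp
    then have "q + (b+4-p) = 10 * j + 4" using F1[OF j aw] t6 unfolding z_def by simp
    then show False using q(1) p(3) unfolding b_def by simp
  qed
  have "p + L = Suc (b + 9)" using lower upper by simp
  then show ?thesis unfolding lz_phrase_ends_at_def z_def[symmetric] b_def[symmetric] L_def
    using p(1) pz by blast
qed

end


context blk
begin

lemma blk_s:
  assumes st: "lz_start (concat xs) (10*j)" and j: "j < length xs" "xs!j = s_str v"
  shows "lz_phrase_ends_at (concat xs) (10*j+9)"
proof -
  define z where "z = concat xs"
  define b where "b = 10 * j"
  have lz: "b + 10 \<le> length z" using lenz j unfolding z_def b_def by simp
  have dj: "\<And>k. k \<le> 10 \<Longrightarrow> drop (b+k) z = drop k (s_str v) @ concat (drop (Suc j) xs)"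
    using drop_concat_blk[OF len10 j(1)] j(2) unfolding z_def b_def by simp
  obtain p where p: "lz_start z p" "b \<le> p" "p \<le> b+9" "b+9 < p + lz_phrase_len z p"
    using cover[of z b "b+9"] st lz unfolding z_def b_def by auto
  define L where "L = lz_phrase_len z p"
  have pz: "p < length z" using p lz by simp
  have qL: "lz_qualifies z p L" using len_qual[OF pz] unfolding L_def .
  have upper: "p + L \<le> b + 10"
  proof (rule ccontr)
    assume "\<not> p + L \<le> b + 10"
    then have big: "b + 11 \<le> p + L" by simp
    obtain q where q: "q < p" "q + (L - 1) \<le> length z" "take (L - 1) (drop q z) = take (L - 1) (drop p z)"
      using qual_get[OF qL] big p(3) by auto
    have "take 1 (drop (q + (b+9-p)) z) = take 1 (drop (p + (b+9-p)) z)"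
      by (rule sub_take[OF q(3)]) (use big p(3) in simp)
    also have "p + (b+9-p) = b + 9" using p(3) by simp
    also have "take 1 (drop (b+9) z) = [Dollar v]"
      using dj[of 9] by (simp add: ss_eq)
    finally have t1: "take 1 (drop (q + (b+9-p)) z) = [Dollar v]" .
    have "q + (b+9-p) + 1 \<le> length z" using q(2) big p(3) by simp
    then have "q + (b+9-p) = 10 * j + 9" using FD[OF j] t1 unfolding z_def by simp
    then show False using q(1) p(3) unfolding b_def by simp
  qed
  have "p + L = Suc (b + 9)" using upper p(4) unfolding L_def by simp
  then show ?thesis unfolding lz_phrase_ends_at_def z_def[symmetric] b_def[symmetric] L_def
    using p(1) pz by blast
qed

lemma all_blocks: "j < length xs \<Longrightarrow> lz_start (concat xs) (10*j) \<and> lz_phrase_ends_at (concat xs) (10*j+9)"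
proof (induction j)
  case 0
  have st: "lz_start (concat xs) (10*0)" using lz_start.start0 by simp
  show ?case
  proof (cases "\<exists>u. xs!0 = s_str u")
    case True then obtain u where "xs!0 = s_str u" by blast
    then show ?thesis using blk_s[OF st 0] st by simp
  next
    case False
    then obtain u x where "xs!0 = ek u (prd u x) x" "prd u x \<noteq> x" "(u,x) \<in> E" using shape[OF 0] by blast
    then show ?thesis using blk_e[OF st 0] st by simp
  qed
next
  case (Suc j)
  then have "lz_phrase_ends_at (concat xs) (10*j+9)" by simp
  then obtain p where p: "lz_start (concat xs) p" "p < length (concat xs)"
    "p + lz_phrase_len (concat xs) p = Suc (10*j+9)" unfolding lz_phrase_ends_at_def by blast
  have st: "lz_start (concat xs) (10 * Suc j)" using lz_start.step[OF p(1,2)] p(3) by simp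
  show ?case
  proof (cases "\<exists>u. xs!Suc j = s_str u")
    case True then obtain u where "xs!Suc j = s_str u" by blast
    then show ?thesis using blk_s[OF st Suc.prems] st by simp
  next
    case False
    then obtain u x where "xs!Suc j = ek u (prd u x) x" "prd u x \<noteq> x" "(u,x) \<in> E" using shape[OF Suc.prems] by blast
    then show ?thesis using blk_e[OF st Suc.prems] st by simp
  qed
qed

end

lemma len_take_concat: "\<forall>y\<in>set xs. length y = 10 \<Longrightarrow> j \<le> length xs \<Longrightarrow> length (concat (take j xs)) = 10 * j"
proof (induction xs arbitrary: j)
  case Nil then show ?case by simp
next
  case (Cons y ys) then show ?case by (cases j) auto
qed

theorem lemma5:
  fixes V :: "'a set" and E :: "('a \<times> 'a) set" and cord :: "'a \<Rightarrow> 'a list"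
    and xs :: "'a sym list list"
  assumes "valid_graph V E cord"
    and "is_batch V E cord xs"
  shows "\<forall>j. 1 \<le> j \<and> j \<le> length xs \<longrightarrow>
           lz_phrase_ends_at (concat xs) (length (concat (take j xs)) - 1)"
proof -
  have "blk xs (prc cord) E"
  proof
    show "\<forall>y\<in>set xs. (\<exists>u. y = s_str u) \<or> (\<exists>u x. y = ek u (prc cord u x) x \<and> prc cord u x \<noteq> x \<and> (u,x) \<in> E)"
    proof
      fix y assume "y \<in> set xs"
      then have "y \<in> S_set V E cord" using assms(2) by (auto simp: is_batch_def)
      then show "(\<exists>u. y = s_str u) \<or> (\<exists>u x. y = ek u (prc cord u x) x \<and> prc cord u x \<noteq> x \<and> (u,x) \<in> E)"
        unfolding S_set_def using graph_ne[OF assms(1)] by (auto simp: e_eq) blast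
    qed
    show "\<And>u x x'. (u,x)\<in>E \<Longrightarrow> (u,x')\<in>E \<Longrightarrow> prc cord u x = prc cord u x' \<Longrightarrow> x = x'"
      using graph_inj[OF assms(1)] by blast
    show "distinct xs" using assms(2) by (simp add: is_batch_def)
  qed
  then interpret blk xs "prc cord" E .
  show ?thesis
  proof (intro allI impI)
    fix j assume j: "1 \<le> j \<and> j \<le> length xs"
    have "length (concat (take j xs)) - 1 = 10 * (j - 1) + 9"
    proof -
      have "length (concat (take j xs)) = 10 * j" using len_take_concat[OF len10] j by simp
      then show ?thesis using j by (cases j) auto
    qed
    moreover have "j - 1 < length xs" using j by linarith
    ultimately show "lz_phrase_ends_at (concat xs) (length (concat (take j xs)) - 1)"
      using all_blocks by simp
  qed
qed

end
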